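(* For any torsionfree compact Hausdorff linear-topological $o$-module $M$, the locally convex $K$-vector space $M_K$ is complete.
   Context: $K$ is a finite extension of $\mathbb{Q}_p$ with ring of integers $o$. A topological $o$-module is linear-topological if $0$ has a fundamental system of open neighbourhoods consisting of $o$-submodules. For a torsionfree $o$-module $M$, $M_K := M\otimes_o K$ contains $M$, and $M_K$ is equipped with the finest locally convex topology such that the inclusion $M\subseteq M_K$ is continuous (equivalently, an $o$-submodule $L\subseteq M_K$ is open iff $\alpha L\cap M$ is open in $M$ for every $0\neq\alpha\in o$). *)

theory Defs
  imports "HOL-Analysis.Analysis"
begin

text \<open>The base field K: a field of characteristic 0, complete with respect to a
 discrete non-archimedean absolute value with finite residue field
 (= a finite extension of Q_p for some prime p).\<close>

definition p_adic_field :: "('k::field \<Rightarrow> real) \<Rightarrow> bool" where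
  "p_adic_field nv \<longleftrightarrow>
     (\<forall>x. 0 \<le> nv x) \<and> (\<forall>x. nv x = 0 \<longleftrightarrow> x = 0) \<and>
     (\<forall>x y. nv (x * y) = nv x * nv y) \<and>
     (\<forall>x y. nv (x + y) \<le> max (nv x) (nv y)) \<and>
     (\<exists>\<pi>. 0 < nv \<pi> \<and> nv \<pi> < 1 \<and> (\<forall>x. x \<noteq> 0 \<longrightarrow> (\<exists>n::int. nv x = nv \<pi> powi n))) \<and>
     (\<forall>X::nat \<Rightarrow> 'k. (\<forall>e>0. \<exists>N. \<forall>m\<ge>N. \<forall>n\<ge>N. nv (X m - X n) < e) \<longrightarrow>
        (\<exists>L. \<forall>e>0. \<exists>N. \<forall>n\<ge>N. nv (X n - L) < e)) \<and>
     (\<exists>R. finite R \<and> (\<forall>x. nv x \<le> 1 \<longrightarrow> (\<exists>r\<in>R. nv r \<le> 1 \<and> nv (x - r) < 1))) \<and>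
     (\<forall>n::nat. n > 0 \<longrightarrow> of_nat n \<noteq> (0::'k))"

definition int_ring :: "('k::field \<Rightarrow> real) \<Rightarrow> 'k set" where
  "int_ring nv = {x. nv x \<le> 1}"

definition int_ring_topology :: "('k::field \<Rightarrow> real) \<Rightarrow> 'k topology" where
  "int_ring_topology nv = topology (\<lambda>U. U \<subseteq> int_ring nv \<and>
      (\<forall>x\<in>U. \<exists>e>0. \<forall>y\<in>int_ring nv. nv (y - x) < e \<longrightarrow> y \<in> U))"

definition o_submodule :: "('k::field \<Rightarrow> real) \<Rightarrow> ('k \<Rightarrow> 'v::ab_group_add \<Rightarrow> 'v) \<Rightarrow> 'v set \<Rightarrow> bool" where
  "o_submodule nv smul L \<longleftrightarrow> 0 \<in> L \<and> (\<forall>x\<in>L. \<forall>y\<in>L. x + y \<in> L) \<and>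
      (\<forall>a x. a \<in> int_ring nv \<longrightarrow> x \<in> L \<longrightarrow> smul a x \<in> L)"

definition topological_o_module :: "('k::field \<Rightarrow> real) \<Rightarrow> ('k \<Rightarrow> 'v::ab_group_add \<Rightarrow> 'v) \<Rightarrow> 'v topology \<Rightarrow> bool" where
  "topological_o_module nv smul T \<longleftrightarrow> o_submodule nv smul (topspace T) \<and>
      continuous_map (prod_topology T T) T (\<lambda>(x, y). x + y) \<and>
      continuous_map T T uminus \<and>
      continuous_map (prod_topology (int_ring_topology nv) T) T (\<lambda>(a, x). smul a x)"

definition linear_topological :: "('k::field \<Rightarrow> real) \<Rightarrow> ('k \<Rightarrow> 'v::ab_group_add \<Rightarrow> 'v) \<Rightarrow> 'v topology \<Rightarrow> bool" where
  "linear_topological nv smul T \<longleftrightarrow>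
     (\<forall>U. openin T U \<and> 0 \<in> U \<longrightarrow> (\<exists>L. o_submodule nv smul L \<and> openin T L \<and> L \<subseteq> U))"

text \<open>The finest locally convex topology on M_K (= the whole ambient type) such that
 the inclusion M \<subseteq> M_K is continuous: the open o-submodules are those L with
 \<alpha>L \<inter> M open in M for all nonzero \<alpha> in o, and these form a basis of 0-neighbourhoods.\<close>
definition MK_topology :: "('k::field \<Rightarrow> real) \<Rightarrow> ('k \<Rightarrow> 'v::ab_group_add \<Rightarrow> 'v) \<Rightarrow> 'v set \<Rightarrow> 'v topology \<Rightarrow> 'v topology" where
  "MK_topology nv smul M T = topology (\<lambda>U. \<forall>x\<in>U. \<exists>L. o_submodule nv smul L \<and>
      (\<forall>\<alpha>. \<alpha> \<in> int_ring nv \<and> \<alpha> \<noteq> 0 \<longrightarrow> openin T (smul \<alpha> ` L \<inter> M)) \<and>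
      (\<lambda>y. x + y) ` L \<subseteq> U)"

definition tvs_cauchy_filter :: "'v::ab_group_add topology \<Rightarrow> 'v filter \<Rightarrow> bool" where
  "tvs_cauchy_filter \<tau> F \<longleftrightarrow> F \<noteq> bot \<and> eventually (\<lambda>x. x \<in> topspace \<tau>) F \<and>
     (\<forall>U. openin \<tau> U \<and> 0 \<in> U \<longrightarrow>
        (\<exists>A. eventually (\<lambda>x. x \<in> A) F \<and> (\<forall>x\<in>A. \<forall>y\<in>A. x - y \<in> U)))"

definition tvs_complete :: "'v::ab_group_add topology \<Rightarrow> bool" where
  "tvs_complete \<tau> \<longleftrightarrow> (\<forall>F. tvs_cauchy_filter \<tau> F \<longrightarrow> (\<exists>x. limitin \<tau> id x F))"

end

theory Submission
  imports Defs
begin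

locale mkctx = vector_space smul for smul :: "'k::field \<Rightarrow> 'v::ab_group_add \<Rightarrow> 'v" +
  fixes nv :: "'k \<Rightarrow> real" and M :: "'v set" and T :: "'v topology"
  assumes padic: "p_adic_field nv"
    and subM: "o_submodule nv smul M"
    and finM: "\<forall>v. \<exists>a. a \<in> int_ring nv \<and> a \<noteq> 0 \<and> smul a v \<in> M"
    and topM: "topspace T = M"
    and tom: "topological_o_module nv smul T"
    and cpt: "compact_space T"
begin

lemma nvnn: "0 \<le> nv x" and nv0: "nv x = 0 \<longleftrightarrow> x = 0" and nvm: "nv (x * y) = nv x * nv y"
  using padic unfolding p_adic_field_def by auto

lemma pi_ex: "\<exists>\<pi>. 0 < nv \<pi> \<and> nv \<pi> < 1"
  using padic unfolding p_adic_field_def by auto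

definition pi where "pi = (SOME \<pi>. 0 < nv \<pi> \<and> nv \<pi> < 1)"

lemma pi: "0 < nv pi" "nv pi < 1"
  using someI_ex[OF pi_ex] unfolding pi_def by auto

lemma nv1: "nv 1 = 1"
proof -
  have "nv 1 = nv 1 * nv 1" using nvm[of 1 1] by simp
  moreover have "nv 1 \<noteq> 0" using nv0 by simp
  ultimately show ?thesis by simp
qed

lemma nvpow: "nv (pi ^ n) = nv pi ^ n"
  by (induct n) (simp_all add: nv1 nvm)

lemma nvneg1: "nv (-1) = 1"
proof -
  have "(nv (-1))^2 = 1" using nvm[of "-1" "-1"] nv1 by (simp add: power2_eq_square)
  then show ?thesis using nvnn[of "-1"] by (simp add: power2_eq_1_iff)
qed

lemma int_mul: "a \<in> int_ring nv \<Longrightarrow> b \<in> int_ring nv \<Longrightarrow> a * b \<in> int_ring nv"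
  unfolding int_ring_def mem_Collect_eq nvm by (rule mult_le_one) (auto simp: nvnn)

lemma neg1_int: "-1 \<in> int_ring nv" unfolding int_ring_def using nvneg1 by simp
lemma one_int: "1 \<in> int_ring nv" unfolding int_ring_def using nv1 by simp

lemma pi_int: "pi ^ n \<in> int_ring nv"
  unfolding int_ring_def mem_Collect_eq nvpow using pi by (intro power_le_one) auto

lemma pi_nz: "pi ^ n \<noteq> 0"
proof -
  have "pi \<noteq> 0" using pi(1) nv0[of pi] by force
  then show ?thesis by (rule power_not_zero)
qed

lemma div_int: assumes "a \<noteq> 0" "nv b \<le> nv a" shows "b / a \<in> int_ring nv"
proof -
  have "nv (b / a) * nv a = nv b" using nvm[of "b/a" a] assms by simp
  moreover have "nv a > 0" using nv0 nvnn assms by (metis less_eq_real_def)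
  ultimately have "nv (b / a) * nv a \<le> 1 * nv a" using assms(2) by simp
  then have "nv (b / a) \<le> 1" using \<open>nv a > 0\<close> by (rule mult_right_le_imp_le)
  then show ?thesis unfolding int_ring_def by simp
qed

lemma arch: assumes "a \<noteq> 0" shows "\<exists>k. \<forall>n\<ge>k. nv (pi ^ n) \<le> nv a"
proof -
  have "nv a > 0" using nv0 nvnn assms by (metis less_eq_real_def)
  then obtain k where k: "nv pi ^ k < nv a" using real_arch_pow_inv pi by blast
  have "nv pi ^ n \<le> nv pi ^ k" if "n \<ge> k" for n
    by (rule power_decreasing) (use pi that in auto)
  then have "nv (pi ^ n) \<le> nv a" if "n \<ge> k" for n
    unfolding nvpow using k that by (meson less_imp_le order_trans)
  then have "\<forall>n\<ge>k. nv (pi ^ n) \<le> nv a" by blast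
  then show ?thesis by blast
qed

lemma sub_neg: "o_submodule nv smul L \<Longrightarrow> x \<in> L \<Longrightarrow> -x \<in> L"
  unfolding o_submodule_def using neg1_int by (metis scale_minus_left scale_one)

lemma sub_diff: "o_submodule nv smul L \<Longrightarrow> x \<in> L \<Longrightarrow> y \<in> L \<Longrightarrow> x - y \<in> L"
  using sub_neg[of L y] unfolding o_submodule_def by (metis diff_conv_add_uminus)

lemma sub_add: "o_submodule nv smul L \<Longrightarrow> x \<in> L \<Longrightarrow> y \<in> L \<Longrightarrow> x + y \<in> L"
  unfolding o_submodule_def by blast

lemma sub_0: "o_submodule nv smul L \<Longrightarrow> 0 \<in> L"
  unfolding o_submodule_def by blast

lemma sub_smul: "o_submodule nv smul L \<Longrightarrow> a \<in> int_ring nv \<Longrightarrow> x \<in> L \<Longrightarrow> smul a x \<in> L"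
  unfolding o_submodule_def by blast

lemma sub_UNIV: "o_submodule nv smul UNIV"
  unfolding o_submodule_def by blast

lemma sub_Int: "o_submodule nv smul L \<Longrightarrow> o_submodule nv smul L' \<Longrightarrow> o_submodule nv smul (L \<inter> L')"
  unfolding o_submodule_def by blast

lemma in_piM: "\<exists>n. smul (pi ^ n) v \<in> M"
proof -
  obtain a where a: "a \<in> int_ring nv" "a \<noteq> 0" "smul a v \<in> M" using finM by blast
  obtain k where k: "nv (pi ^ k) \<le> nv a" using arch[OF a(2)] by blast
  have "smul (pi^k / a) (smul a v) \<in> M"
    using sub_smul[OF subM div_int[OF a(2) k] a(3)] .
  then have "smul (pi ^ k) v \<in> M" using a(2) by simp
  then show ?thesis by blast
qed

lemma cont_add: "continuous_map (prod_topology T T) T (\<lambda>(x, y). x + y)"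
  using tom unfolding topological_o_module_def by blast

lemma open_transl: assumes "openin T S" "y \<in> M"
  shows "openin T {z \<in> M. z - y \<in> S}"
proof -
  have "continuous_map T T (\<lambda>z. z + (- y))"
  proof -
    have "- y \<in> M" using sub_neg[OF subM assms(2)] .
    then have "continuous_map T (prod_topology T T) (\<lambda>z. (z, - y))"
      by (intro continuous_map_pairedI continuous_map_id[unfolded id_def] continuous_map_const[THEN iffD2]) (simp add: topM)
    from continuous_map_compose[OF this cont_add] show ?thesis by (simp add: o_def)
  qed
  from openin_continuous_map_preimage[OF this assms(1)]
  have "openin T {z \<in> topspace T. z + - y \<in> S}" .
  then show ?thesis unfolding topM diff_conv_add_uminus .
qed

lemma open_subgroup:
  assumes "openin T V" "0 \<in> V" "V \<subseteq> S" "S \<subseteq> M"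
    and "\<And>x y. x \<in> S \<Longrightarrow> y \<in> S \<Longrightarrow> x + y \<in> S"
    and "\<And>x y. x \<in> S \<Longrightarrow> y \<in> S \<Longrightarrow> x - y \<in> S"
  shows "openin T S"
proof (subst openin_subopen, intro ballI)
  fix y assume y: "y \<in> S"
  have "openin T {z \<in> M. z - y \<in> V}" using open_transl assms y by blast
  moreover have "y \<in> {z \<in> M. z - y \<in> V}" using y assms by auto
  moreover have "{z \<in> M. z - y \<in> V} \<subseteq> S"
  proof
    fix z assume "z \<in> {z \<in> M. z - y \<in> V}"
    then have "z - y \<in> S" using assms by auto
    then have "(z - y) + y \<in> S" using assms y by blast
    then show "z \<in> S" by simp
  qed
  ultimately show "\<exists>U. openin T U \<and> y \<in> U \<and> U \<subseteq> S" by blast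
qed


definition olat where
  "olat L \<longleftrightarrow> o_submodule nv smul L \<and>
      (\<forall>\<alpha>. \<alpha> \<in> int_ring nv \<and> \<alpha> \<noteq> 0 \<longrightarrow> openin T (smul \<alpha> ` L \<inter> M))"

lemma olat_Int: assumes "olat L1" "olat L2" shows "olat (L1 \<inter> L2)"
  unfolding olat_def
proof (intro conjI allI impI)
  show "o_submodule nv smul (L1 \<inter> L2)"
    by (rule sub_Int) (use assms in \<open>simp_all add: olat_def\<close>)
  fix \<alpha> assume a: "\<alpha> \<in> int_ring nv \<and> \<alpha> \<noteq> 0"
  have inj: "inj (smul \<alpha>)" using injective_scale[of \<alpha>] a by simp
  have "smul \<alpha> ` (L1 \<inter> L2) \<inter> M = (smul \<alpha> ` L1 \<inter> M) \<inter> (smul \<alpha> ` L2 \<inter> M)"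
    unfolding image_Int[OF inj] by (simp add: Int_ac)
  moreover have "openin T (smul \<alpha> ` L1 \<inter> M)" using assms(1) a unfolding olat_def by simp
  moreover have "openin T (smul \<alpha> ` L2 \<inter> M)" using assms(2) a unfolding olat_def by simp
  ultimately show "openin T (smul \<alpha> ` (L1 \<inter> L2) \<inter> M)" by (simp add: openin_Int)
qed

lemma olat_UNIV: "olat UNIV"
  unfolding olat_def
proof (intro conjI allI impI)
  show "o_submodule nv smul UNIV" by (rule sub_UNIV)
  fix \<alpha> assume a: "\<alpha> \<in> int_ring nv \<and> \<alpha> \<noteq> 0"
  have "smul \<alpha> ` UNIV = UNIV"
    by (rule surjI[of "smul \<alpha>" "smul (inverse \<alpha>)"]) (use a in simp)
  then have "smul \<alpha> ` UNIV \<inter> M = M" by simp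
  then show "openin T (smul \<alpha> ` UNIV \<inter> M)" using topM openin_topspace[of T] by simp
qed

definition MKP where "MKP U \<longleftrightarrow> (\<forall>x\<in>U. \<exists>L. olat L \<and> (\<lambda>y. x + y) ` L \<subseteq> U)"

lemma istop: "istopology MKP"
  unfolding istopology_def
proof (intro conjI allI impI)
  fix S T' assume S: "MKP S" and T': "MKP T'"
  show "MKP (S \<inter> T')" unfolding MKP_def
  proof
    fix x assume x: "x \<in> S \<inter> T'"
    then have "x \<in> S" "x \<in> T'" by simp_all
    have "\<exists>L. olat L \<and> (\<lambda>y. x + y) ` L \<subseteq> S"
      using S \<open>x \<in> S\<close> unfolding MKP_def by (rule bspec)
    then obtain L1 where L1: "olat L1" "(\<lambda>y. x + y) ` L1 \<subseteq> S" by (elim exE conjE)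
    have "\<exists>L. olat L \<and> (\<lambda>y. x + y) ` L \<subseteq> T'"
      using T' \<open>x \<in> T'\<close> unfolding MKP_def by (rule bspec)
    then obtain L2 where L2: "olat L2" "(\<lambda>y. x + y) ` L2 \<subseteq> T'" by (elim exE conjE)
    have "olat (L1 \<inter> L2)" using L1(1) L2(1) by (rule olat_Int)
    moreover have "(\<lambda>y. x + y) ` (L1 \<inter> L2) \<subseteq> S \<inter> T'"
      using L1(2) L2(2) by (simp add: image_subset_iff)
    ultimately show "\<exists>L. olat L \<and> (\<lambda>y. x + y) ` L \<subseteq> S \<inter> T'" by (intro exI conjI)
  qed
next
  fix K assume K: "\<forall>K'\<in>K. MKP K'"
  show "MKP (\<Union>K)" unfolding MKP_def
  proof
    fix x assume "x \<in> \<Union>K"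
    then obtain K' where K': "K' \<in> K" "x \<in> K'" by (elim UnionE)
    then have "MKP K'" using K by simp
    then have "\<exists>L. olat L \<and> (\<lambda>y. x + y) ` L \<subseteq> K'"
      using K'(2) unfolding MKP_def by (rule bspec)
    then obtain L where L: "olat L" "(\<lambda>y. x + y) ` L \<subseteq> K'" by (elim exE conjE)
    have "(\<lambda>y. x + y) ` L \<subseteq> \<Union>K" using L(2) K'(1) by (rule subset_trans[OF _ Union_upper])
    then show "\<exists>L. olat L \<and> (\<lambda>y. x + y) ` L \<subseteq> \<Union>K" using L(1) by (intro exI conjI)
  qed
qed

lemma openin_MK: "openin (MK_topology nv smul M T) U \<longleftrightarrow> MKP U"
proof -
  have "MK_topology nv smul M T = topology MKP"
    unfolding MK_topology_def MKP_def olat_def by (simp only: conj_assoc)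
  then show ?thesis using istop by simp
qed

lemma olat_open: assumes "olat L" shows "openin (MK_topology nv smul M T) L"
  unfolding openin_MK MKP_def
proof
  fix x assume x: "x \<in> L"
  have sub: "o_submodule nv smul L" using assms unfolding olat_def by simp
  have "(\<lambda>y. x + y) ` L \<subseteq> L" using sub_add[OF sub x] by (simp add: image_subset_iff)
  then show "\<exists>L'. olat L' \<and> (\<lambda>y. x + y) ` L' \<subseteq> L" using assms by (intro exI conjI)
qed

lemma olat_0: "olat L \<Longrightarrow> 0 \<in> L" using sub_0 unfolding olat_def by blast

lemma cauchy_olat: assumes "tvs_cauchy_filter (MK_topology nv smul M T) F" "olat L"
  shows "\<exists>A. eventually (\<lambda>x. x \<in> A) F \<and> (\<forall>x\<in>A. \<forall>y\<in>A. x - y \<in> L)"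
proof -
  have "\<forall>U. openin (MK_topology nv smul M T) U \<and> 0 \<in> U \<longrightarrow>
        (\<exists>A. eventually (\<lambda>x. x \<in> A) F \<and> (\<forall>x\<in>A. \<forall>y\<in>A. x - y \<in> U))"
    using assms(1) unfolding tvs_cauchy_filter_def by (elim conjE)
  then have "openin (MK_topology nv smul M T) L \<and> 0 \<in> L \<longrightarrow>
        (\<exists>A. eventually (\<lambda>x. x \<in> A) F \<and> (\<forall>x\<in>A. \<forall>y\<in>A. x - y \<in> L))" by (rule spec)
  then show ?thesis by (rule mp) (intro conjI olat_open olat_0 assms(2))
qed

definition PM where "PM n = {u. smul (pi ^ n) u \<in> M}"

definition SS where "SS n L = {u + l |u l. u \<in> PM n \<and> l \<in> L}"

lemma SS_sub: assumes "o_submodule nv smul L" shows "o_submodule nv smul (SS n L)"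
  unfolding o_submodule_def
proof (intro conjI allI ballI impI)
  have "0 \<in> PM n" unfolding PM_def using sub_0[OF subM] by simp
  moreover have "(0::'v) = 0 + 0" by simp
  ultimately show "0 \<in> SS n L" unfolding SS_def using sub_0[OF assms] by blast
next
  fix x y assume "x \<in> SS n L" "y \<in> SS n L"
  then obtain u l u' l' where "x = u + l" "y = u' + l'" "u \<in> PM n" "u' \<in> PM n" "l \<in> L" "l' \<in> L"
    unfolding SS_def by blast
  moreover have "x + y = (u + u') + (l + l')" using calculation by (simp add: algebra_simps)
  moreover have "u + u' \<in> PM n" using calculation sub_add[OF subM] unfolding PM_def
    by (simp add: scale_right_distrib)
  moreover have "l + l' \<in> L" using calculation sub_add[OF assms] by blast
  ultimately show "x + y \<in> SS n L" unfolding SS_def by blast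
next
  fix a x assume a: "a \<in> int_ring nv" and "x \<in> SS n L"
  then obtain u l where "x = u + l" "u \<in> PM n" "l \<in> L" unfolding SS_def by blast
  moreover have "smul a x = smul a u + smul a l" using calculation by (simp add: scale_right_distrib)
  moreover have "smul a u \<in> PM n"
  proof -
    have e: "smul (pi ^ n) (smul a u) = smul a (smul (pi ^ n) u)" by (rule scale_left_commute)
    have "smul a (smul (pi ^ n) u) \<in> M" using calculation(2) sub_smul[OF subM a] unfolding PM_def by blast
    then show ?thesis unfolding PM_def mem_Collect_eq e .
  qed
  moreover have "smul a l \<in> L" using calculation sub_smul[OF assms a] by blast
  ultimately show "smul a x \<in> SS n L" unfolding SS_def by blast
qed

lemma sub_INTER: assumes "\<And>n. o_submodule nv smul (S n)" shows "o_submodule nv smul (\<Inter>n. S n)"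
  unfolding o_submodule_def
proof (intro conjI allI ballI impI)
  show "0 \<in> (\<Inter>n. S n)" using sub_0[OF assms] by simp
next
  fix x y assume "x \<in> (\<Inter>n. S n)" "y \<in> (\<Inter>n. S n)"
  then show "x + y \<in> (\<Inter>n. S n)" using sub_add[OF assms] by simp
next
  fix a x assume a: "a \<in> int_ring nv" and "x \<in> (\<Inter>n. S n)"
  then show "smul a x \<in> (\<Inter>n. S n)" using sub_smul[OF assms a] by simp
qed

lemma step1: assumes cf: "tvs_cauchy_filter (MK_topology nv smul M T) F"
  shows "\<exists>n. \<forall>L. olat L \<longrightarrow> (\<exists>A. eventually (\<lambda>x. x \<in> A) F \<and> A \<subseteq> SS n L)"
proof (rule ccontr)
  assume "\<not> ?thesis"
  then have "\<forall>n. \<exists>L. olat L \<and> \<not> (\<exists>A. eventually (\<lambda>x. x \<in> A) F \<and> A \<subseteq> SS n L)" by (simp only: not_ex not_all not_imp simp_thms)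
  from choice[OF this] obtain Ls where Ls0: "\<forall>n. olat (Ls n) \<and> \<not> (\<exists>A. eventually (\<lambda>x. x \<in> A) F \<and> A \<subseteq> SS n (Ls n))"
    by (elim exE)
  then have Ls: "\<And>n. olat (Ls n)" "\<And>n. \<not> (\<exists>A. eventually (\<lambda>x. x \<in> A) F \<and> A \<subseteq> SS n (Ls n))"
    by blast+
  define L where "L = (\<Inter>n. SS n (Ls n))"
  have subL: "o_submodule nv smul L"
    unfolding L_def by (rule sub_INTER, rule SS_sub) (use Ls(1) in \<open>simp add: olat_def\<close>)
  have "olat L" unfolding olat_def
  proof (intro conjI allI impI subL)
    fix \<alpha> assume a: "\<alpha> \<in> int_ring nv \<and> \<alpha> \<noteq> 0"
    obtain k where k: "\<And>n. n \<ge> k \<Longrightarrow> nv (pi ^ n) \<le> nv \<alpha>" using arch a by blast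
    define V where "V = \<Inter> (insert M ((\<lambda>n. smul \<alpha> ` Ls n \<inter> M) ` {..<k}))"
    have oLn: "openin T (smul \<alpha> ` Ls n \<inter> M)" for n using Ls(1)[of n] a unfolding olat_def by blast
    have oM: "openin T M" using openin_topspace[of T] unfolding topM .
    have oV: "openin T V" unfolding V_def
    proof (rule openin_Inter)
      show "finite (insert M ((\<lambda>n. smul \<alpha> ` Ls n \<inter> M) ` {..<k}))" by simp
      show "insert M ((\<lambda>n. smul \<alpha> ` Ls n \<inter> M) ` {..<k}) \<noteq> {}" by simp
      fix X assume "X \<in> insert M ((\<lambda>n. smul \<alpha> ` Ls n \<inter> M) ` {..<k})"
      then show "openin T X" using oM oLn by blast
    qed
    have z0: "0 \<in> smul \<alpha> ` Ls n" for n
    proof -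
      have "smul \<alpha> 0 = 0" by (rule scale_zero_right)
      then show ?thesis using olat_0[OF Ls(1)[of n]] by (metis image_eqI)
    qed
    have zV: "0 \<in> V" unfolding V_def using sub_0[OF subM] z0 by blast
    have VS: "V \<subseteq> smul \<alpha> ` L \<inter> M"
    proof
      fix v assume v: "v \<in> V"
      then have vM: "v \<in> M" unfolding V_def by blast
      define w where "w = smul (inverse \<alpha>) v"
      have vw: "v = smul \<alpha> w" unfolding w_def using a by simp
      have "w \<in> SS n (Ls n)" for n
      proof (cases "n < k")
        case True
        then have "v \<in> smul \<alpha> ` Ls n" using v unfolding V_def by blast
        then obtain l where "l \<in> Ls n" "v = smul \<alpha> l" by blast
        then have "w = 0 + l" "0 \<in> PM n" using a sub_0[OF subM] unfolding w_def PM_def by auto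
        then show ?thesis using \<open>l \<in> Ls n\<close> unfolding SS_def by blast
      next
        case False
        then have "(pi ^ n) / \<alpha> \<in> int_ring nv" using k[of n] a by (intro div_int) auto
        then have "smul ((pi ^ n) / \<alpha>) v \<in> M" using sub_smul[OF subM] vM by blast
        then have "w \<in> PM n" unfolding PM_def w_def by (simp add: divide_inverse)
        then have "w = w + 0" "w \<in> PM n" by simp_all
        then show ?thesis using olat_0[OF Ls(1)] unfolding SS_def by blast
      qed
      then have "w \<in> L" unfolding L_def by blast
      then show "v \<in> smul \<alpha> ` L \<inter> M" using vw vM by blast
    qed
    have cl: "x + y \<in> smul \<alpha> ` L \<inter> M" "x - y \<in> smul \<alpha> ` L \<inter> M"
      if xy: "x \<in> smul \<alpha> ` L \<inter> M" "y \<in> smul \<alpha> ` L \<inter> M" for x y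
    proof -
      obtain l1 l2 where l: "l1 \<in> L" "l2 \<in> L" "x = smul \<alpha> l1" "y = smul \<alpha> l2" "x \<in> M" "y \<in> M"
        using xy by blast
      have e: "x + y = smul \<alpha> (l1 + l2)" "x - y = smul \<alpha> (l1 - l2)"
        using l by (simp_all add: scale_right_distrib scale_right_diff_distrib)
      have i: "l1 + l2 \<in> L" "l1 - l2 \<in> L" using sub_add[OF subL l(1,2)] sub_diff[OF subL l(1,2)] by blast+
      have m: "x + y \<in> M" "x - y \<in> M" using sub_add[OF subM l(5,6)] sub_diff[OF subM l(5,6)] by blast+
      have "x + y \<in> smul \<alpha> ` L" using e(1) i(1) by (rule image_eqI)
      moreover have "x - y \<in> smul \<alpha> ` L" using e(2) i(2) by (rule image_eqI)
      ultimately show "x + y \<in> smul \<alpha> ` L \<inter> M" "x - y \<in> smul \<alpha> ` L \<inter> M"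
        using m by blast+
    qed
    show "openin T (smul \<alpha> ` L \<inter> M)"
      by (rule open_subgroup[OF oV zV VS _ cl]) blast
  qed
  then obtain A where A: "eventually (\<lambda>x. x \<in> A) F" "\<forall>x\<in>A. \<forall>y\<in>A. x - y \<in> L"
    using cauchy_olat[OF cf] by blast
  have "F \<noteq> bot" using cf unfolding tvs_cauchy_filter_def by blast
  then obtain a where aA: "a \<in> A" using eventually_happens'[OF _ A(1)] by blast
  obtain m where m: "a \<in> PM m" using in_piM unfolding PM_def by blast
  have "A \<subseteq> SS m (Ls m)"
  proof
    fix b assume "b \<in> A"
    then have "b - a \<in> SS m (Ls m)" using A(2) aA unfolding L_def by blast
    then obtain u l where ul: "b - a = u + l" "u \<in> PM m" "l \<in> Ls m" unfolding SS_def by blast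
    have "a + u \<in> PM m" using m ul sub_add[OF subM] unfolding PM_def by (simp add: scale_right_distrib)
    moreover have "b = (a + u) + l" using ul by (simp add: algebra_simps)
    ultimately show "b \<in> SS m (Ls m)" using ul unfolding SS_def by blast
  qed
  then show False using Ls(2) A(1) by blast
qed


lemma topspace_MK: "topspace (MK_topology nv smul M T) = UNIV"
proof -
  have "MKP UNIV" unfolding MKP_def using olat_UNIV by blast
  then have "openin (MK_topology nv smul M T) UNIV" using openin_MK by blast
  then show ?thesis using openin_subset by blast
qed

lemma complete: "tvs_complete (MK_topology nv smul M T)"
  unfolding tvs_complete_def
proof (intro allI impI)
  fix F assume cf: "tvs_cauchy_filter (MK_topology nv smul M T) F"
  have Fnb: "F \<noteq> bot" using cf unfolding tvs_cauchy_filter_def by (elim conjE)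
  obtain n where n0: "\<forall>L. olat L \<longrightarrow> (\<exists>A. eventually (\<lambda>x. x \<in> A) F \<and> A \<subseteq> SS n L)"
    using step1[OF cf] by (elim exE)
  have n: "\<exists>A. eventually (\<lambda>x. x \<in> A) F \<and> A \<subseteq> SS n L" if "olat L" for L
    using n0 that by simp
  define c where "c = pi ^ n"
  define ci where "ci = inverse c"
  have c: "c \<noteq> 0" "c \<in> int_ring nv" unfolding c_def by (rule pi_nz, rule pi_int)
  define B where "B A L = {m \<in> M. \<exists>a l. smul ci m = a + l \<and> a \<in> A \<and> l \<in> L}" for A L
  define U where "U = {C. \<exists>A L. C = T closure_of B A L \<and> eventually (\<lambda>x. x \<in> A) F \<and> olat L}"
  have Umem: "T closure_of B A L \<in> U" if "eventually (\<lambda>x. x \<in> A) F" "olat L" for A L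
    unfolding U_def mem_Collect_eq using that by blast
  have Bne: "B A L \<noteq> {}" if A: "eventually (\<lambda>x. x \<in> A) F" and L: "olat L" for A L
  proof -
    obtain A' where A': "eventually (\<lambda>x. x \<in> A') F" "A' \<subseteq> SS n L" using n[OF L] by (elim exE conjE)
    have "eventually (\<lambda>x. x \<in> A \<and> x \<in> A') F" using A A'(1) by (rule eventually_conj)
    from eventually_happens'[OF Fnb this] obtain a where a: "a \<in> A" "a \<in> A'" by (elim exE conjE)
    have "a \<in> SS n L" using A'(2) a(2) by (rule subsetD)
    then obtain u l where ul: "a = u + l" "u \<in> PM n" "l \<in> L" unfolding SS_def by (elim CollectE exE conjE)
    define m where "m = smul c u"
    have mM: "m \<in> M" using ul(2) unfolding m_def PM_def c_def by simp
    have sm: "smul ci m = a + (- l)" using ul(1) c(1) unfolding m_def ci_def by simp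
    have subL: "o_submodule nv smul L" using L unfolding olat_def by simp
    have nl: "- l \<in> L" using sub_neg[OF subL ul(3)] .
    have "m \<in> B A L" unfolding B_def mem_Collect_eq using mM sm a(1) nl by (intro conjI exI)
    then show ?thesis by (intro notI) simp
  qed
  have BM: "B A L \<subseteq> M" for A L unfolding B_def by (rule subsetI) simp
  have Bmono: "B A L \<subseteq> B A' L'" if "A \<subseteq> A'" "L \<subseteq> L'" for A L A' L'
  proof
    fix m assume "m \<in> B A L"
    then obtain a l where "m \<in> M" "smul ci m = a + l" "a \<in> A" "l \<in> L" unfolding B_def by (elim CollectE exE conjE)
    then show "m \<in> B A' L'" unfolding B_def mem_Collect_eq using that by (intro conjI exI) auto
  qed
  have fin: "\<exists>A L. eventually (\<lambda>x. x \<in> A) F \<and> olat L \<and> B A L \<subseteq> \<Inter>G"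
    if "finite G" "G \<subseteq> U" for G
    using that
  proof (induction G rule: finite_induct)
    case empty
    show ?case using olat_UNIV by (intro exI[of _ UNIV] conjI) simp_all
  next
    case (insert C G)
    then have "G \<subseteq> U" "C \<in> U" by simp_all
    from insert.IH[OF \<open>G \<subseteq> U\<close>] obtain A L where AL: "eventually (\<lambda>x. x \<in> A) F" "olat L" "B A L \<subseteq> \<Inter>G"
      by (elim exE conjE)
    from \<open>C \<in> U\<close> obtain A1 L1 where C: "C = T closure_of B A1 L1" "eventually (\<lambda>x. x \<in> A1) F" "olat L1"
      unfolding U_def mem_Collect_eq by (elim exE conjE)
    have s1: "B (A \<inter> A1) (L \<inter> L1) \<subseteq> B A L" by (rule Bmono) simp_all
    have s2: "B (A \<inter> A1) (L \<inter> L1) \<subseteq> B A1 L1" by (rule Bmono) simp_all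
    have s3: "B A1 L1 \<subseteq> C" unfolding C(1) using BM topM by (intro closure_of_subset) simp
    have ev: "eventually (\<lambda>x. x \<in> A \<inter> A1) F" using eventually_conj[OF AL(1) C(2)] by simp
    have ol: "olat (L \<inter> L1)" using AL(2) C(3) by (rule olat_Int)
    have "B (A \<inter> A1) (L \<inter> L1) \<subseteq> \<Inter>(insert C G)" using s1 s2 s3 AL(3) by auto
    then show ?case using ev ol by (intro exI conjI)
  qed
  have cl: "\<forall>C\<in>U. closedin T C"
  proof
    fix C assume "C \<in> U"
    then obtain A L where "C = T closure_of B A L" unfolding U_def mem_Collect_eq by (elim exE conjE)
    then show "closedin T C" by simp
  qed
  have fp: "\<forall>G. finite G \<and> G \<subseteq> U \<longrightarrow> \<Inter>G \<noteq> {}"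
  proof (intro allI impI)
    fix G assume G: "finite G \<and> G \<subseteq> U"
    then have "finite G" "G \<subseteq> U" by simp_all
    from fin[OF this] obtain A L where AL: "eventually (\<lambda>x. x \<in> A) F" "olat L" "B A L \<subseteq> \<Inter>G"
      by (elim conjE exE)
    have "B A L \<noteq> {}" using Bne[OF AL(1,2)] .
    then show "\<Inter>G \<noteq> {}" using AL(3) by auto
  qed
  have "(\<forall>C\<in>U. closedin T C) \<and> (\<forall>G. finite G \<and> G \<subseteq> U \<longrightarrow> \<Inter>G \<noteq> {}) \<longrightarrow> \<Inter>U \<noteq> {}"
    using cpt unfolding compact_space_fip by (rule spec)
  then have "\<Inter>U \<noteq> {}" using cl fp by simp
  then obtain x where x: "x \<in> \<Inter>U" by auto
  have "T closure_of B UNIV UNIV \<in> U" by (rule Umem) (simp_all add: olat_UNIV)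
  with x have "x \<in> T closure_of B UNIV UNIV" by (rule InterD)
  then have xM: "x \<in> M" unfolding in_closure_of topM by simp
  define z where "z = smul ci x"
  show "\<exists>z. limitin (MK_topology nv smul M T) id z F"
    unfolding limitin_def topspace_MK
  proof (intro exI[of _ z] conjI allI impI UNIV_I)
    fix U' assume U': "openin (MK_topology nv smul M T) U' \<and> z \<in> U'"
    then have "MKP U'" "z \<in> U'" unfolding openin_MK by simp_all
    then have "\<exists>L. olat L \<and> (\<lambda>y. z + y) ` L \<subseteq> U'" unfolding MKP_def by (rule bspec)
    then obtain L where L: "olat L" "(\<lambda>y. z + y) ` L \<subseteq> U'" by (elim exE conjE)
    obtain A where A: "eventually (\<lambda>x. x \<in> A) F" "\<forall>x\<in>A. \<forall>y\<in>A. x - y \<in> L"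
      using cauchy_olat[OF cf L(1)] by (elim exE conjE)
    have "T closure_of B A L \<in> U" using A(1) L(1) by (rule Umem)
    with x have xc: "x \<in> T closure_of B A L" by (rule InterD)
    have subL: "o_submodule nv smul L" using L(1) unfolding olat_def by simp
    have ocL: "openin T (smul c ` L \<inter> M)" using L(1) c unfolding olat_def by simp
    define W where "W = {y \<in> M. y - x \<in> smul c ` L \<inter> M}"
    have oW: "openin T W" unfolding W_def using ocL xM by (rule open_transl)
    have "smul c 0 = 0" by (rule scale_zero_right)
    then have "0 \<in> smul c ` L" using sub_0[OF subL] by (metis image_eqI)
    then have xW: "x \<in> W" unfolding W_def using xM sub_0[OF subM] by simp
    from xc have "\<forall>T'. x \<in> T' \<and> openin T T' \<longrightarrow> (\<exists>y. y \<in> B A L \<and> y \<in> T')"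
      unfolding in_closure_of by simp
    then obtain y where y: "y \<in> B A L" "y \<in> W" using xW oW by blast
    from y(1) obtain a l' where al: "a \<in> A" "l' \<in> L" "smul ci y = a + l'"
      unfolding B_def by (elim CollectE exE conjE) simp
    from y(2) obtain l'' where l'': "l'' \<in> L" "y - x = smul c l''" unfolding W_def by auto
    have l''2: "l'' = smul ci y - z"
    proof -
      have "smul ci (y - x) = l''" using l''(2) c(1) unfolding ci_def by simp
      then show ?thesis unfolding z_def by (simp add: scale_right_diff_distrib)
    qed
    have bU: "b \<in> U'" if b: "b \<in> A" for b
    proof -
      have "b - a \<in> L" using A(2) b al(1) by simp
      then have "(b - a) + l'' \<in> L" using sub_add[OF subL] l''(1) by simp
      then have "(b - a) + l'' - l' \<in> L" using sub_diff[OF subL] al(2) by simp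
      moreover have "b = z + ((b - a) + l'' - l')" using l''2 al(3) by (simp add: algebra_simps)
      ultimately have "b \<in> (\<lambda>y. z + y) ` L" by (rule rev_image_eqI)
      with L(2) show ?thesis by (rule subsetD)
    qed
    show "eventually (\<lambda>x. id x \<in> U') F" using A(1) by (rule eventually_mono) (simp add: bU)
  qed
qed

end

theorem lemma1p4:
  fixes nv :: "'k::field \<Rightarrow> real"
    and smul :: "'k \<Rightarrow> 'v::ab_group_add \<Rightarrow> 'v"
    and M :: "'v set"
    and T :: "'v topology"
  assumes "p_adic_field nv"
    and "vector_space smul"
    and "o_submodule nv smul M"
    and "\<forall>v. \<exists>a. a \<in> int_ring nv \<and> a \<noteq> 0 \<and> smul a v \<in> M"
    and "topspace T = M"
    and "topological_o_module nv smul T"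
    and "linear_topological nv smul T"
    and "compact_space T"
    and "Hausdorff_space T"
  shows "tvs_complete (MK_topology nv smul M T)"
proof -
  interpret mkctx smul nv M T
    using assms unfolding mkctx_def mkctx_axioms_def by blast
  show ?thesis by (rule complete)
qed

end
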